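(* Let $G=(V,E)$ be a finite connected undirected unweighted graph, let $\lambda\in[0,1]$, and consider the $\lambda$-mixed Moran process on $G$ with mutant fitness $r=1$. Then for every $S\subseteq V$, \[\mathrm{fp}^{\lambda,1}_G(S)=\sum_{u\in S}\mathrm{fp}^{\lambda,1}_G(\{u\}).\]
   Context: The $\lambda$-mixed Moran process on a connected graph $G=(V,E)$ with $n=|V|\ge 2$ vertices: each vertex hosts either a resident (fitness $1$) or a mutant (fitness $r>0$); the state (configuration) is the set $S_t\subseteq V$ of mutant vertices. $N(u)$ is the neighbor set of $u$, $\deg_u=|N(u)|$. At each discrete step, independently: with probability $\lambda$ a Birth-death (Bd) step occurs, in which a vertex $u$ is chosen with probability proportional to its fitness (among all $n$ vertices), then a uniformly random neighbor $v\in N(u)$ is replaced by an offspring of the type of $u$; with probability $1-\lambda$ a death-Birth (dB) step occurs, in which a vertex $v$ is chosen uniformly at random to die, then a neighbor $u\in N(v)$ is chosen with probability proportional to fitness (among $N(v)$) and $v$ takes the type of $u$. The process is absorbed when $S_t=\emptyset$ (extinction) or $S_t=V$ (fixation). $\mathrm{fp}^{\lambda,r}_G(S)$ denotes the probability that the process started from $S_0=S$ reaches $S_t=V$ at some time. *)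

theory Defs
  imports Complex_Main
begin

definition graph :: "'a set \<Rightarrow> ('a \<Rightarrow> 'a \<Rightarrow> bool) \<Rightarrow> bool" where
  "graph V E \<longleftrightarrow> finite V \<and> (\<forall>u v. E u v \<longrightarrow> u \<in> V \<and> v \<in> V)
     \<and> (\<forall>u v. E u v \<longrightarrow> E v u) \<and> (\<forall>u. \<not> E u u)"

definition connected_graph :: "'a set \<Rightarrow> ('a \<Rightarrow> 'a \<Rightarrow> bool) \<Rightarrow> bool" where
  "connected_graph V E \<longleftrightarrow> graph V E \<and> (\<forall>u\<in>V. \<forall>v\<in>V. E\<^sup>*\<^sup>* u v)"

definition nbrs :: "('a \<Rightarrow> 'a \<Rightarrow> bool) \<Rightarrow> 'a \<Rightarrow> 'a set" where
  "nbrs E u = {v. E u v}"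

text \<open>Fitness of vertex u in configuration S (S = set of mutants).\<close>
definition fit :: "real \<Rightarrow> 'a set \<Rightarrow> 'a \<Rightarrow> real" where
  "fit r S u = (if u \<in> S then r else 1)"

text \<open>Offspring of u replaces v.\<close>
definition repl :: "'a set \<Rightarrow> 'a \<Rightarrow> 'a \<Rightarrow> 'a set" where
  "repl S u v = (if u \<in> S then insert v S else S - {v})"

text \<open>reach V E lam r t S: probability that the lambda-mixed Moran process started
in S is in state V (fixation) at some time \<le> t (V is absorbing). First-step analysis.\<close>
primrec reach :: "'a set \<Rightarrow> ('a \<Rightarrow> 'a \<Rightarrow> bool) \<Rightarrow> real \<Rightarrow> real \<Rightarrow> nat \<Rightarrow> 'a set \<Rightarrow> real" where
  "reach V E lam r 0 S = (if S = V then 1 else 0)"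
| "reach V E lam r (Suc t) S =
     (if S = V then 1 else
        lam * (\<Sum>u\<in>V. \<Sum>v\<in>nbrs E u.
                  (fit r S u / (\<Sum>w\<in>V. fit r S w)) * (1 / real (card (nbrs E u)))
                  * reach V E lam r t (repl S u v))
      + (1 - lam) * (\<Sum>v\<in>V. \<Sum>u\<in>nbrs E v.
                  (1 / real (card V)) * (fit r S u / (\<Sum>w\<in>nbrs E v. fit r S w))
                  * reach V E lam r t (repl S u v)))"

definition fp :: "'a set \<Rightarrow> ('a \<Rightarrow> 'a \<Rightarrow> bool) \<Rightarrow> real \<Rightarrow> real \<Rightarrow> 'a set \<Rightarrow> real" where
  "fp V E lam r S = (SUP t. reach V E lam r t S)"

end

theory Submission
  imports Defs "Jordan_Normal_Form.Determinant"
begin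


lemma sum_list_idx:
  assumes "distinct xs"
  shows "(\<Sum>i<length xs. f (xs ! i)) = (\<Sum>x\<in>set xs. (f x :: real))"
proof -
  have "(\<Sum>i<length xs. f (xs ! i)) = sum_list (map f xs)"
    by (simp add: sum_list_sum_nth atLeast0LessThan)
  also have "\<dots> = (\<Sum>x\<in>set xs. f x)" using assms by (simp add: sum_list_distinct_conv_sum_set)
  finally show ?thesis .
qed

lemma kernel_exists:
  fixes c :: "'a \<Rightarrow> 'a \<Rightarrow> real"
  assumes fin: "finite V" and ne: "V \<noteq> {}" and col: "\<forall>y\<in>V. (\<Sum>x\<in>V. c x y) = 0"
  shows "\<exists>w. (\<forall>x\<in>V. (\<Sum>y\<in>V. c x y * w y) = 0) \<and> (\<exists>x\<in>V. w x \<noteq> 0)"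
proof -
  obtain xs where xs: "set xs = V" "distinct xs" using finite_distinct_list[OF fin] by blast
  define n where "n = length xs"
  define A where "A = mat n n (\<lambda>(i,j). c (xs!i) (xs!j))"
  have A: "A \<in> carrier_mat n n" unfolding A_def by simp
  have AT: "transpose_mat A \<in> carrier_mat n n" using A by simp
  have "transpose_mat A *\<^sub>v (vec n (\<lambda>_. 1)) = 0\<^sub>v n"
  proof (rule eq_vecI)
    fix j assume j: "j < dim_vec (0\<^sub>v n :: real vec)"
    hence jn: "j < n" by simp
    have "(transpose_mat A *\<^sub>v vec n (\<lambda>_. 1)) $ j = (\<Sum>i<n. c (xs!i) (xs!j))"
      using jn unfolding A_def by (simp add: scalar_prod_def atLeast0LessThan)
    also have "\<dots> = (\<Sum>x\<in>V. c x (xs!j))" using sum_list_idx[OF xs(2), of "\<lambda>x. c x (xs!j)"] xs(1) n_def by simp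
    also have "\<dots> = 0" using col jn xs(1) n_def by auto
    finally show "(transpose_mat A *\<^sub>v vec n (\<lambda>_. 1)) $ j = 0\<^sub>v n $ j" using jn by simp
  qed (use A in simp)
  moreover have "vec n (\<lambda>_. 1) \<noteq> (0\<^sub>v n :: real vec)"
  proof -
    have "n > 0" using ne xs n_def by auto
    hence "(vec n (\<lambda>_. 1) :: real vec) $ 0 \<noteq> 0\<^sub>v n $ 0" by simp
    thus ?thesis by metis
  qed
  ultimately have "det (transpose_mat A) = 0"
    using det_0_iff_vec_prod_zero_field[OF AT] by (meson vec_carrier)
  hence "det A = 0" using det_transpose[OF A] by simp
  then obtain v where v: "v \<in> carrier_vec n" "v \<noteq> 0\<^sub>v n" "A *\<^sub>v v = 0\<^sub>v n"
    using det_0_iff_vec_prod_zero_field[OF A] by blast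
  define ix where "ix x = (SOME i. i < n \<and> xs ! i = x)" for x :: 'a
  have ix: "ix (xs ! k) = k" if "k < n" for k
    unfolding ix_def using that xs(2) n_def
    by (rule_tac some_equality) (auto simp: nth_eq_iff_index_eq)
  define w where "w x = v $ (ix x)" for x :: 'a
  have "\<forall>x\<in>V. (\<Sum>y\<in>V. c x y * w y) = 0"
  proof
    fix x assume x: "x \<in> V"
    obtain i where i: "i < n" "xs ! i = x" using x xs n_def by (metis in_set_conv_nth)
    have "(\<Sum>y\<in>V. c x y * w y) = (\<Sum>k<n. c x (xs!k) * w (xs!k))"
      using sum_list_idx[OF xs(2), of "\<lambda>y. c x y * w y"] xs(1) n_def by simp
    also have "\<dots> = (\<Sum>k<n. c x (xs!k) * v $ k)"
      unfolding w_def using ix by simp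
    also have "\<dots> = (A *\<^sub>v v) $ i" using i v(1) unfolding A_def
      by (simp add: scalar_prod_def atLeast0LessThan)
    also have "\<dots> = 0" using v(3) i by simp
    finally show "(\<Sum>y\<in>V. c x y * w y) = 0" .
  qed
  moreover have "\<exists>x\<in>V. w x \<noteq> 0"
  proof (rule ccontr)
    assume "\<not> ?thesis"
    hence "\<forall>k<n. v $ k = 0" unfolding w_def using xs n_def
      by (metis nth_mem ix)
    hence "v = 0\<^sub>v n" using v(1) by (intro eq_vecI) auto
    thus False using v(2) by simp
  qed
  ultimately show ?thesis by blast
qed


locale moran =
  fixes V :: "'a set" and E :: "'a \<Rightarrow> 'a \<Rightarrow> bool" and lam :: real
  assumes conn: "connected_graph V E" and card2: "card V \<ge> 2"
    and lam0: "0 \<le> lam" and lam1: "lam \<le> 1"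
begin

lemma gr: "graph V E" using conn unfolding connected_graph_def by auto
lemma finV: "finite V" using gr unfolding graph_def by auto
lemma EV: "E u v \<Longrightarrow> u \<in> V \<and> v \<in> V" using gr unfolding graph_def by auto
lemma Esym: "E u v = E v u" using gr unfolding graph_def by auto
lemma Eirr: "\<not> E u u" using gr unfolding graph_def by auto

lemma nbrs_eq: "nbrs E u = {v\<in>V. E u v}" using EV unfolding nbrs_def by auto
lemma fin_nbrs: "finite (nbrs E u)" using finV nbrs_eq by simp

lemma rtr_step: "E\<^sup>*\<^sup>* x y \<Longrightarrow> x \<noteq> y \<Longrightarrow> \<exists>z. E x z"
  by (induction rule: converse_rtranclp_induct) auto

lemma nbrs_ne: assumes "u \<in> V" shows "nbrs E u \<noteq> {}"
proof -
  have "\<exists>v\<in>V. v \<noteq> u"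
  proof (rule ccontr)
    assume "\<not> ?thesis" hence "V \<subseteq> {u}" by auto
    hence "card V \<le> 1" by (metis card.insert card_mono empty_iff finite.intros(1) finite_insert card.empty One_nat_def)
    thus False using card2 by simp
  qed
  then obtain v where "v \<in> V" "v \<noteq> u" by blast
  hence "E\<^sup>*\<^sup>* u v" using conn assms unfolding connected_graph_def by auto
  then obtain z where "E u z" using rtr_step \<open>v \<noteq> u\<close> by metis
  thus ?thesis unfolding nbrs_def by auto
qed

lemma deg_pos: "u \<in> V \<Longrightarrow> real (card (nbrs E u)) > 0"
  using nbrs_ne fin_nbrs by (simp add: card_gt_0_iff)

lemma n_pos: "real (card V) > 0" using card2 by simp

definition a :: "'a \<Rightarrow> 'a \<Rightarrow> real" where
  "a u v = lam / (real (card V) * real (card (nbrs E u))) + (1 - lam) / (real (card V) * real (card (nbrs E v)))"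

definition T :: "('a set \<Rightarrow> real) \<Rightarrow> 'a set \<Rightarrow> real" where
  "T f S = (\<Sum>u\<in>V. \<Sum>v\<in>V. (if E u v then a u v * f (repl S u v) else 0))"

lemma a_nonneg: "u \<in> V \<Longrightarrow> v \<in> V \<Longrightarrow> a u v \<ge> 0"
  unfolding a_def using lam0 lam1 deg_pos n_pos by (intro add_nonneg_nonneg divide_nonneg_pos) auto

lemma a_pos: assumes "u \<in> V" "v \<in> V" shows "a u v > 0"
proof (cases "lam > 0")
  case True
  hence "lam / (real (card V) * real (card (nbrs E u))) > 0" using deg_pos n_pos assms by simp
  moreover have "(1 - lam) / (real (card V) * real (card (nbrs E v))) \<ge> 0" using deg_pos n_pos assms lam1 by simp
  ultimately show ?thesis unfolding a_def by linarith
next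
  case False
  hence "lam = 0" using lam0 by simp
  thus ?thesis unfolding a_def using deg_pos n_pos assms by simp
qed

lemma sum_nbrs: "(\<Sum>v\<in>nbrs E u. g v) = (\<Sum>v\<in>V. if E u v then g v else 0)"
  unfolding nbrs_eq using finV by (simp add: sum.inter_filter)

lemma sum_a: "(\<Sum>u\<in>V. \<Sum>v\<in>V. (if E u v then a u v else 0)) = 1"
proof -
  let ?n = "real (card V)" and ?d = "\<lambda>u. real (card (nbrs E u))"
  have 1: "(\<Sum>u\<in>V. \<Sum>v\<in>V. (if E u v then lam / (?n * ?d u) else 0)) = lam"
  proof -
    have "(\<Sum>u\<in>V. \<Sum>v\<in>V. (if E u v then lam / (?n * ?d u) else 0)) = (\<Sum>u\<in>V. \<Sum>v\<in>nbrs E u. lam / (?n * ?d u))"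
      by (simp only: sum_nbrs)
    also have "\<dots> = (\<Sum>u\<in>V. lam / ?n)" using deg_pos by (intro sum.cong) auto
    also have "\<dots> = lam" using n_pos by simp
    finally show ?thesis .
  qed
  have 2: "(\<Sum>u\<in>V. \<Sum>v\<in>V. (if E u v then (1-lam) / (?n * ?d v) else 0)) = 1 - lam"
  proof -
    have "(\<Sum>u\<in>V. \<Sum>v\<in>V. (if E u v then (1-lam) / (?n * ?d v) else 0))
        = (\<Sum>v\<in>V. \<Sum>u\<in>V. (if E v u then (1-lam) / (?n * ?d v) else 0))"
      by (subst sum.swap) (simp add: Esym)
    also have "\<dots> = (\<Sum>v\<in>V. \<Sum>u\<in>nbrs E v. (1-lam) / (?n * ?d v))"
      by (simp only: sum_nbrs)
    also have "\<dots> = (\<Sum>u\<in>V. (1-lam) / ?n)" using deg_pos by (intro sum.cong) auto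
    also have "\<dots> = 1 - lam" using n_pos by simp
    finally show ?thesis .
  qed
  have "(\<Sum>u\<in>V. \<Sum>v\<in>V. (if E u v then a u v else 0)) =
     (\<Sum>u\<in>V. \<Sum>v\<in>V. (if E u v then lam / (?n * ?d u) else 0)) + (\<Sum>u\<in>V. \<Sum>v\<in>V. (if E u v then (1-lam) / (?n * ?d v) else 0))"
    unfolding a_def sum.distrib[symmetric] by (intro sum.cong) auto
  thus ?thesis using 1 2 by simp
qed

lemma reach_T: assumes "S \<noteq> V"
  shows "reach V E lam 1 (Suc t) S = T (reach V E lam 1 t) S"
proof -
  let ?f = "reach V E lam 1 t"
  let ?n = "real (card V)" and ?d = "\<lambda>u. real (card (nbrs E u))"
  have fit1: "fit 1 X u = 1" for X and u :: 'a by (simp add: fit_def)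
  have "reach V E lam 1 (Suc t) S = lam * (\<Sum>u\<in>V. \<Sum>v\<in>nbrs E u. (1 / ?n) * (1 / ?d u) * ?f (repl S u v))
      + (1 - lam) * (\<Sum>v\<in>V. \<Sum>u\<in>nbrs E v. (1 / ?n) * (1 / ?d v) * ?f (repl S u v))"
    using assms by (simp add: fit1)
  also have "\<dots> = (\<Sum>u\<in>V. \<Sum>v\<in>V. (if E u v then lam / (?n * ?d u) * ?f (repl S u v) else 0))
      + (\<Sum>v\<in>V. \<Sum>u\<in>V. (if E v u then (1 - lam) / (?n * ?d v) * ?f (repl S u v) else 0))"
    by (simp add: sum_nbrs sum_distrib_left if_distrib cong: if_cong)
  also have "(\<Sum>v\<in>V. \<Sum>u\<in>V. (if E v u then (1 - lam) / (?n * ?d v) * ?f (repl S u v) else 0))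
      = (\<Sum>u\<in>V. \<Sum>v\<in>V. (if E u v then (1 - lam) / (?n * ?d v) * ?f (repl S u v) else 0))"
    by (subst sum.swap) (simp add: Esym)
  also have "(\<Sum>u\<in>V. \<Sum>v\<in>V. (if E u v then lam / (?n * ?d u) * ?f (repl S u v) else 0))
      + (\<Sum>u\<in>V. \<Sum>v\<in>V. (if E u v then (1 - lam) / (?n * ?d v) * ?f (repl S u v) else 0)) = T ?f S"
    unfolding T_def a_def sum.distrib[symmetric] by (intro sum.cong) (auto simp: algebra_simps)
  finally show ?thesis .
qed


abbreviation R where "R t S \<equiv> reach V E lam 1 t S"

lemma repl_V: "u \<in> V \<Longrightarrow> v \<in> V \<Longrightarrow> repl V u v = V" unfolding repl_def by (simp add: insert_absorb EV)
lemma repl_sub: "S \<subseteq> V \<Longrightarrow> v \<in> V \<Longrightarrow> repl S u v \<subseteq> V" unfolding repl_def by auto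

lemma T_mono: assumes "\<And>X. f X \<le> g X" shows "T f S \<le> T g S"
  unfolding T_def using a_nonneg assms
  by (intro sum_mono) (auto intro: mult_left_mono)

lemma T_const: "T (\<lambda>X. c) S = c"
proof -
  have "T (\<lambda>X. c) S = (\<Sum>u\<in>V. \<Sum>v\<in>V. c * (if E u v then a u v else 0))"
    unfolding T_def by (intro sum.cong) auto
  also have "\<dots> = c * (\<Sum>u\<in>V. \<Sum>v\<in>V. (if E u v then a u v else 0))"
    by (simp add: sum_distrib_left)
  finally have "T (\<lambda>X. c) S = c * (\<Sum>u\<in>V. \<Sum>v\<in>V. (if E u v then a u v else 0))" .
  thus ?thesis using sum_a by simp
qed

lemma T_lin: "T (\<lambda>X. f X - c * g X) S = T f S - c * T g S"
  unfolding T_def by (simp add: sum_distrib_left sum_subtractf[symmetric] if_distrib algebra_simps cong: if_cong)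

lemma reach_V: "R t V = 1" by (cases t) auto

lemma reach_empty: "R t {} = 0"
proof (induction t)
  case 0 then show ?case using card2 by auto
next
  case (Suc t)
  have "V \<noteq> {}" using card2 by auto
  hence "R (Suc t) {} = T (R t) {}" using reach_T by metis
  also have "\<dots> = T (\<lambda>X. 0) {}" unfolding T_def repl_def using Suc.IH by (intro sum.cong refl) auto
  finally show ?case using T_const by simp
qed

lemma reach_bounds: "0 \<le> R t S \<and> R t S \<le> 1"
proof (induction t arbitrary: S)
  case 0 then show ?case by simp
next
  case (Suc t)
  show ?case
  proof (cases "S = V")
    case False
    have "T (\<lambda>X. 0) S \<le> T (R t) S" "T (R t) S \<le> T (\<lambda>X. 1) S" using Suc by (auto intro!: T_mono)
    then show ?thesis using reach_T[OF False] T_const by simp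
  qed simp
qed

lemma reach_mono: "R t S \<le> R (Suc t) S"
proof (induction t arbitrary: S)
  case 0 show ?case
  proof (cases "S = V")
    case True thus ?thesis by (simp add: reach_V)
  next
    case False hence "R 0 S = 0" by simp
    thus ?thesis using reach_bounds[of "Suc 0" S] by linarith
  qed
next
  case (Suc t)
  show ?case
  proof (cases "S = V")
    case False
    show ?thesis using reach_T[OF False] reach_T[OF False, of "Suc t"] Suc by (simp add: T_mono)
  qed simp
qed

lemma reach_lim: "(\<lambda>t. R t S) \<longlonglongrightarrow> fp V E lam 1 S"
  unfolding fp_def
  by (rule LIMSEQ_incseq_SUP) (auto intro: incseq_SucI reach_mono bdd_aboveI2[where M=1] simp: reach_bounds)

lemma fp_V: "fp V E lam 1 V = 1" unfolding fp_def by (simp add: reach_V)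
lemma fp_empty: "fp V E lam 1 {} = 0" unfolding fp_def by (simp add: reach_empty)

lemma fp_T: assumes "S \<noteq> V" shows "fp V E lam 1 S = T (fp V E lam 1) S"
proof -
  have "(\<lambda>t. R (Suc t) S) \<longlonglongrightarrow> fp V E lam 1 S" using reach_lim LIMSEQ_Suc by blast
  moreover have "(\<lambda>t. R (Suc t) S) = (\<lambda>t. T (R t) S)" using reach_T[OF assms] by auto
  moreover have "(\<lambda>t. T (R t) S) \<longlonglongrightarrow> T (fp V E lam 1) S"
    unfolding T_def
  proof (intro tendsto_sum)
    fix u v show "(\<lambda>t. if E u v then a u v * R t (repl S u v) else 0) \<longlonglongrightarrow> (if E u v then a u v * fp V E lam 1 (repl S u v) else 0)"
      by (cases "E u v") (auto intro!: tendsto_mult tendsto_const reach_lim)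
  qed
  ultimately show ?thesis using LIMSEQ_unique by metis
qed


lemma cut_edge: "E\<^sup>*\<^sup>* x y \<Longrightarrow> x \<in> S \<Longrightarrow> y \<notin> S \<Longrightarrow> \<exists>u v. u \<in> S \<and> v \<notin> S \<and> E u v"
proof (induction rule: rtranclp_induct)
  case base then show ?case by simp
next
  case (step y z) then show ?case by (cases "y \<in> S") auto
qed

lemma maxp:
  assumes harm: "\<And>S. S \<subseteq> V \<Longrightarrow> S \<noteq> V \<Longrightarrow> S \<noteq> {} \<Longrightarrow> D S = T D S"
    and DV: "D V = 0" and De: "D {} = 0" and S: "S \<subseteq> V"
  shows "D S \<le> 0"
proof -
  define M where "M = Max (D ` Pow V)"
  have finP: "finite (D ` Pow V)" using finV by simp
  have le: "D X \<le> M" if "X \<subseteq> V" for X unfolding M_def using finP that by (intro Max_ge) auto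
  have key: "\<forall>X. X \<subseteq> V \<longrightarrow> card (V - X) = k \<longrightarrow> D X = M \<longrightarrow> M \<le> 0" for k
  proof (induction k rule: less_induct)
    case (less k)
    show ?case
    proof (intro allI impI)
      fix X assume X: "X \<subseteq> V" "card (V - X) = k" "D X = M"
      show "M \<le> 0"
      proof (cases "X = V \<or> X = {}")
        case True thus ?thesis using X DV De by auto
      next
        case False
        then obtain x y where xy: "x \<in> X" "y \<in> V" "y \<notin> X" using X by blast
        have "E\<^sup>*\<^sup>* x y" using conn xy X unfolding connected_graph_def by auto
        then obtain u v where uv: "u \<in> X" "v \<notin> X" "E u v" using cut_edge xy by metis
        have uvV: "u \<in> V" "v \<in> V" using EV uv by auto
        have "T (\<lambda>Z. M - 1 * D Z) X = M - 1 * T D X" using T_lin[of "\<lambda>Z. M" 1 D X] T_const by simp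
        also have "\<dots> = 0" using harm[of X] X False by simp
        finally have "(\<Sum>u'\<in>V. \<Sum>v'\<in>V. (if E u' v' then a u' v' * (M - D (repl X u' v')) else 0)) = 0"
          by (simp add: T_def)
        moreover have nn: "\<forall>u'\<in>V. \<forall>v'\<in>V. 0 \<le> (if E u' v' then a u' v' * (M - D (repl X u' v')) else 0)"
          using a_nonneg le repl_sub X(1) by auto
        ultimately have "\<forall>u'\<in>V. (\<Sum>v'\<in>V. (if E u' v' then a u' v' * (M - D (repl X u' v')) else 0)) = 0"
          using finV by (subst sum_nonneg_eq_0_iff[symmetric]) (auto intro!: sum_nonneg)
        hence "\<forall>v'\<in>V. (if E u v' then a u v' * (M - D (repl X u v')) else 0) = 0"
          using finV nn uvV by (subst sum_nonneg_eq_0_iff[symmetric]) auto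
        hence "a u v * (M - D (repl X u v)) = 0" using uv uvV by auto
        hence "D (insert v X) = M" using a_pos[OF uvV] uv unfolding repl_def by simp
        moreover have "card (V - insert v X) < k"
        proof -
          have "V - insert v X = (V - X) - {v}" by auto
          moreover have "v \<in> V - X" using uv uvV by auto
          ultimately show ?thesis using X(2) finV by (metis card_Diff1_less finite_Diff)
        qed
        moreover have "insert v X \<subseteq> V" using X uvV by auto
        ultimately show ?thesis using less.IH by blast
      qed
    qed
  qed
  have "M \<in> D ` Pow V" unfolding M_def using finP by (intro Max_in) auto
  then obtain X where "X \<subseteq> V" "D X = M" by auto
  hence "M \<le> 0" using key by blast
  thus ?thesis using le[OF S] by simp
qed

lemma uniq:
  assumes harm: "\<And>S. S \<subseteq> V \<Longrightarrow> S \<noteq> V \<Longrightarrow> S \<noteq> {} \<Longrightarrow> D S = T D S"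
    and DV: "D V = 0" and De: "D {} = 0" and S: "S \<subseteq> V"
  shows "D S = 0"
proof -
  have "D S \<le> 0" using maxp assms by blast
  moreover have "- D S \<le> 0"
  proof (rule maxp[where D = "\<lambda>X. - D X"])
    fix X assume "X \<subseteq> V" "X \<noteq> V" "X \<noteq> {}"
    thus "- D X = T (\<lambda>X. - D X) X" using harm T_lin[of "\<lambda>Z. 0" 1 D X] T_const by simp
  qed (use DV De S in auto)
  ultimately show ?thesis by simp
qed


definition Lw :: "('a \<Rightarrow> real) \<Rightarrow> 'a \<Rightarrow> real" where
  "Lw w x = (\<Sum>y\<in>V. (if E x y then a x y else 0) * w y) - w x * (\<Sum>u\<in>V. if E u x then a u x else 0)"

lemma exists_w: "\<exists>w. (\<forall>x\<in>V. Lw w x = 0) \<and> (\<exists>x\<in>V. w x \<noteq> 0)"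
proof -
  define K where "K x = (\<Sum>u\<in>V. if E u x then a u x else 0)" for x
  define c where "c x y = (if E x y then a x y else 0) - (if x = y then K x else 0)" for x y
  have "\<forall>y\<in>V. (\<Sum>x\<in>V. c x y) = 0"
    unfolding c_def K_def using finV by (simp add: sum_subtractf)
  moreover have "V \<noteq> {}" using card2 by auto
  ultimately obtain w where w: "\<forall>x\<in>V. (\<Sum>y\<in>V. c x y * w y) = 0" "\<exists>x\<in>V. w x \<noteq> 0"
    using kernel_exists[OF finV] by blast
  have "Lw w x = (\<Sum>y\<in>V. c x y * w y)" if "x \<in> V" for x
  proof -
    have "(\<Sum>y\<in>V. c x y * w y) = (\<Sum>y\<in>V. (if E x y then a x y else 0) * w y - (if x = y then K x * w y else 0))"
      unfolding c_def by (intro sum.cong) (auto simp: algebra_simps)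
    also have "\<dots> = (\<Sum>y\<in>V. (if E x y then a x y else 0) * w y) - K x * w x"
      using finV that by (simp add: sum_subtractf)
    finally show ?thesis unfolding Lw_def K_def by (simp add: mult.commute)
  qed
  thus ?thesis using w by auto
qed

lemma phi_harm:
  assumes L: "\<forall>x\<in>V. Lw w x = 0" and S: "S \<subseteq> V"
  shows "T (\<lambda>X. \<Sum>x\<in>X. w x) S = (\<Sum>x\<in>S. w x)"
proof -
  define \<phi> where "\<phi> X = (\<Sum>x\<in>X. w x)" for X
  have finS: "finite S" using S finV finite_subset by blast
  have loc: "(if E u v then a u v * (\<phi> (repl S u v) - 1 * \<phi> S) else 0)
      = (if u \<in> S then (if E u v then a u v * w v else 0) else 0) - (if v \<in> S then (if E u v then a u v else 0) * w v else 0)"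
    for u v
  proof (cases "E u v")
    case True
    have "\<phi> (repl S u v) - \<phi> S = (if u \<in> S then w v else 0) - (if v \<in> S then w v else 0)"
    proof (cases "u \<in> S")
      case True thus ?thesis unfolding repl_def \<phi>_def using finS by (cases "v \<in> S") (auto simp: insert_absorb)
    next
      case False thus ?thesis unfolding repl_def \<phi>_def using finS by (cases "v \<in> S") (auto simp: sum_diff1)
    qed
    hence e: "\<phi> (repl S u v) - 1 * \<phi> S = (if u \<in> S then w v else 0) - (if v \<in> S then w v else 0)" by simp
    show ?thesis using True by (simp only: e if_True) (cases "u \<in> S"; cases "v \<in> S"; simp)
  qed auto
  have "T \<phi> S - \<phi> S = T (\<lambda>X. \<phi> X - 1 * \<phi> S) S"
    using T_lin[of \<phi> 1 "\<lambda>_. \<phi> S" S] T_const by simp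
  also have "\<dots> = (\<Sum>u\<in>V. \<Sum>v\<in>V. (if u \<in> S then (if E u v then a u v * w v else 0) else 0))
      - (\<Sum>u\<in>V. \<Sum>v\<in>V. (if v \<in> S then (if E u v then a u v else 0) * w v else 0))"
    unfolding T_def loc by (simp add: sum_subtractf)
  also have "(\<Sum>u\<in>V. \<Sum>v\<in>V. (if u \<in> S then (if E u v then a u v * w v else 0) else 0))
      = (\<Sum>x\<in>V. if x \<in> S then (\<Sum>y\<in>V. (if E x y then a x y else 0) * w y) else 0)"
    by (intro sum.cong) (auto intro!: sum.cong)
  also have "(\<Sum>u\<in>V. \<Sum>v\<in>V. (if v \<in> S then (if E u v then a u v else 0) * w v else 0))
      = (\<Sum>x\<in>V. if x \<in> S then w x * (\<Sum>u\<in>V. if E u x then a u x else 0) else 0)"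
    by (subst sum.swap) (auto intro!: sum.cong simp: sum_distrib_left mult.commute)
  also have "(\<Sum>x\<in>V. if x \<in> S then (\<Sum>y\<in>V. (if E x y then a x y else 0) * w y) else 0)
      - (\<Sum>x\<in>V. if x \<in> S then w x * (\<Sum>u\<in>V. if E u x then a u x else 0) else 0)
      = (\<Sum>x\<in>V. if x \<in> S then Lw w x else 0)"
    unfolding Lw_def sum_subtractf[symmetric] by (intro sum.cong) auto
  also have "\<dots> = 0" using L by (intro sum.neutral) auto
  finally show ?thesis unfolding \<phi>_def by simp
qed

theorem main: assumes S: "S \<subseteq> V"
  shows "fp V E lam 1 S = (\<Sum>u\<in>S. fp V E lam 1 {u})"
proof -
  obtain w where L: "\<forall>x\<in>V. Lw w x = 0" and nz: "\<exists>x\<in>V. w x \<noteq> 0" using exists_w by blast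
  define \<phi> where "\<phi> X = (\<Sum>x\<in>X. w x)" for X
  have ph: "X \<subseteq> V \<Longrightarrow> T \<phi> X = \<phi> X" for X unfolding \<phi>_def using phi_harm[OF L] by blast
  define W where "W = \<phi> V"
  have W: "W \<noteq> 0"
  proof
    assume W0: "W = 0"
    have "\<phi> X = 0" if "X \<subseteq> V" for X
      by (rule uniq[where D = \<phi>]) (use ph W0 that in \<open>auto simp: W_def \<phi>_def\<close>)
    hence "\<forall>x\<in>V. w x = 0" unfolding \<phi>_def by (metis empty_subsetI insert_subset sum.empty sum.insert
        finite.emptyI empty_iff add.right_neutral)
    thus False using nz by auto
  qed
  define D where "D X = fp V E lam 1 X - (1 / W) * \<phi> X" for X
  have D0: "D X = 0" if "X \<subseteq> V" for X
  proof (rule uniq[where D = D])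
    fix Y assume Y: "Y \<subseteq> V" "Y \<noteq> V" "Y \<noteq> {}"
    show "D Y = T D Y" unfolding D_def T_lin using fp_T[OF Y(2)] ph[OF Y(1)] by simp
  qed (use that W in \<open>auto simp: D_def fp_V fp_empty W_def \<phi>_def\<close>)
  have fpX: "fp V E lam 1 X = \<phi> X / W" if "X \<subseteq> V" for X using D0[OF that] unfolding D_def by simp
  have "fp V E lam 1 S = (\<Sum>u\<in>S. w u) / W" using fpX[OF S] unfolding \<phi>_def by simp
  also have "\<dots> = (\<Sum>u\<in>S. w u / W)" by (simp add: sum_divide_distrib)
  also have "\<dots> = (\<Sum>u\<in>S. fp V E lam 1 {u})" using S fpX by (intro sum.cong) (auto simp: \<phi>_def)
  finally show ?thesis .
qed

end

theorem mainTheorem1: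
  fixes V :: "'a set" and E :: "'a \<Rightarrow> 'a \<Rightarrow> bool" and lam :: real and S :: "'a set"
  assumes "connected_graph V E" and "card V \<ge> 2"
    and "0 \<le> lam" and "lam \<le> 1" and "S \<subseteq> V"
  shows "fp V E lam 1 S = (\<Sum>u\<in>S. fp V E lam 1 {u})"
proof -
  interpret moran V E lam using assms by unfold_locales
  show ?thesis using main assms(5) by blast
qed

end
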